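(* Let $G$ be a finite abelian group and $\{a,b\}$ a $2$-element generating set of $G$ with $a$ and $b$ nontrivial. If the subgroup $\langle a-b\rangle$ has even index in $G$, then $\mathrm{Cay}(G;a,b)$ has two arc-disjoint hamiltonian paths.
   Context: For an abelian group $G$ and $a,b\in G$, the Cayley digraph $\mathrm{Cay}(G;a,b)$ has vertex set $G$ and an arc from $v$ to $v+s$ for every $v\in G$ and $s\in\{a,b\}$. A hamiltonian path is a directed path visiting every vertex exactly once; arc-disjoint means sharing no arc. *)

theory Defs
  imports Main
begin

definition add_subgroup :: "'a::ab_group_add set \<Rightarrow> bool" where
  "add_subgroup H \<longleftrightarrow> 0 \<in> H \<and> (\<forall>x\<in>H. \<forall>y\<in>H. x + y \<in> H) \<and> (\<forall>x\<in>H. - x \<in> H)"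

definition gen_subgroup :: "'a::ab_group_add set \<Rightarrow> 'a set" where
  "gen_subgroup S = \<Inter>{H. add_subgroup H \<and> S \<subseteq> H}"

definition subgroup_index :: "'a::ab_group_add set \<Rightarrow> nat" where
  "subgroup_index H = card (UNIV :: 'a set) div card H"

definition cay_arcs :: "'a::ab_group_add \<Rightarrow> 'a \<Rightarrow> ('a \<times> 'a) set" where
  "cay_arcs a b = {(v, v + s) | v s. s \<in> {a, b}}"

definition path_arcs :: "'a list \<Rightarrow> ('a \<times> 'a) set" where
  "path_arcs p = set (zip p (tl p))"

definition ham_path :: "'a::ab_group_add \<Rightarrow> 'a \<Rightarrow> 'a list \<Rightarrow> bool" where
  "ham_path a b p \<longleftrightarrow> distinct p \<and> set p = UNIV \<and> path_arcs p \<subseteq> cay_arcs a b"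

end

theory Submission
  imports Defs
begin

fun nm :: "nat \<Rightarrow> 'a::ab_group_add \<Rightarrow> 'a" where
  "nm 0 x = 0" | "nm (Suc k) x = x + nm k x"

lemma nm_add: "nm (i+j) x = nm i x + nm j x"
  by (induction i) (auto simp: add.assoc)

lemma nm_mult: "nm (i*j) x = nm i (nm j x)"
  by (induction i) (auto simp: nm_add)

lemma nm_plus: "nm k (x+y) = nm k x + nm k y"
  by (induction k) (auto simp: algebra_simps)

lemma nm_uminus: "nm k (-x) = - nm k x"
  by (induction k) (auto simp: algebra_simps)

lemma nm_diff: "nm k (x-y) = nm k x - nm k y"
  by (induction k) (auto simp: algebra_simps)

lemma nm_zero[simp]: "nm k 0 = 0"
  by (induction k) auto

lemma nm_one[simp]: "nm 1 x = x" by simp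

lemma nm_sub: "j \<le> i \<Longrightarrow> nm (i - j) x = nm i x - nm j x"
  using nm_add[of "i-j" j x] by simp

definition Mset :: "'a::ab_group_add \<Rightarrow> 'a set" where
  "Mset x = range (\<lambda>k. nm k x)"

lemma fin_ord:
  assumes "finite (UNIV::'a::ab_group_add set)"
  shows "\<exists>N>0. nm N (x::'a) = 0"
proof -
  have "\<not> inj_on (\<lambda>k. nm k x) {0..card (UNIV::'a set)}"
  proof
    assume "inj_on (\<lambda>k. nm k x) {0..card (UNIV::'a set)}"
    then have "card {0..card (UNIV::'a set)} \<le> card (UNIV::'a set)"
      using card_inj_on_le[OF _ subset_UNIV assms] by blast
    then show False by simp
  qed
  then obtain i j where ij: "i \<noteq> j" "nm i x = nm j x"
    unfolding inj_on_def by auto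
  have key: "\<exists>N>0. nm N x = 0" if "i' < j'" "nm i' x = nm j' x" for i' j'
  proof -
    have "nm j' x = nm (j' - i') x + nm i' x" using nm_add[of "j'-i'" i' x] that(1) by simp
    then have "nm (j' - i') x = 0" using that(2) by simp
    then show ?thesis using that(1) by (intro exI[of _ "j'-i'"]) simp
  qed
  show ?thesis
  proof (cases "i < j")
    case True
    then show ?thesis using key ij by blast
  next
    case False
    then have "j < i" using ij by simp
    then show ?thesis using key ij by metis
  qed
qed

lemma Mset_0[simp]: "0 \<in> Mset x"
  unfolding Mset_def by (rule range_eqI[of _ _ 0]) simp

lemma Mset_self[simp]: "x \<in> Mset x"
  unfolding Mset_def by (rule range_eqI[of _ _ 1]) simp

lemma Mset_add: "u \<in> Mset x \<Longrightarrow> v \<in> Mset x \<Longrightarrow> u + v \<in> Mset x"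
  unfolding Mset_def by (auto simp: nm_add[symmetric])

lemma Mset_nm: "u \<in> Mset x \<Longrightarrow> nm k u \<in> Mset x"
  unfolding Mset_def by (auto simp: nm_mult[symmetric])

lemma Mset_uminus:
  assumes fin: "finite (UNIV::'a::ab_group_add set)" and u: "u \<in> Mset (x::'a)"
  shows "- u \<in> Mset x"
proof -
  obtain N where N: "N > 0" "nm N x = 0" using fin_ord[OF fin] by blast
  have "nm (N - 1) x + x = 0" using N nm_add[of "N-1" 1 x] by simp
  then have "- x = nm (N - 1) x" by (metis add_eq_0_iff2)
  then have "- x \<in> Mset x" unfolding Mset_def by auto
  moreover obtain k where "u = nm k x" using u unfolding Mset_def by auto
  ultimately show ?thesis using Mset_nm[of "-x" x k] by (simp add: nm_uminus)
qed

lemma Mset_diff: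
  assumes "finite (UNIV::'a::ab_group_add set)" "u \<in> Mset (x::'a)" "v \<in> Mset x"
  shows "u - v \<in> Mset x"
  using Mset_add[OF assms(2) Mset_uminus[OF assms(1,3)]] by simp

lemma Mset_subset: "u \<in> Mset x \<Longrightarrow> Mset u \<subseteq> Mset x"
  unfolding Mset_def[of u] using Mset_nm by auto

lemma Mset_neg:
  assumes "finite (UNIV::'a::ab_group_add set)"
  shows "Mset (- (x::'a)) = Mset x"
  using Mset_subset[OF Mset_uminus[OF assms Mset_self[of x]]]
        Mset_subset[OF Mset_uminus[OF assms Mset_self[of "-x"]]] by auto


lemma path_from_reach:
  fixes f :: "'a \<Rightarrow> 'a"
  assumes inj: "\<And>v v'. v \<noteq> y \<Longrightarrow> v' \<noteq> y \<Longrightarrow> f v = f v' \<Longrightarrow> v = v'"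
    and xn: "\<And>v. v \<noteq> y \<Longrightarrow> f v \<noteq> x"
    and reach: "\<And>v. \<exists>k. (f^^k) v = y"
  shows "\<exists>p. distinct p \<and> set p = UNIV \<and> path_arcs p \<subseteq> {(v, f v) | v. True}"
proof -
  define k0 where "k0 = (LEAST k. (f^^k) x = y)"
  have k0y: "(f^^k0) x = y" unfolding k0_def using reach[of x] by (rule LeastI_ex)
  have bef: "(f^^i) x \<noteq> y" if "i < k0" for i
    using not_less_Least[of i "\<lambda>k. (f^^k) x = y"] that unfolding k0_def by blast
  define p where "p = map (\<lambda>i. (f^^i) x) [0..<Suc k0]"
  have neq: "(f^^i) x \<noteq> (f^^j) x" if "i < j" "j \<le> k0" for i j
    using that
  proof (induction i arbitrary: j)
    case 0
    then obtain j' where j': "j = Suc j'" by (cases j) auto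
    have "(f^^j) x = f ((f^^j') x)" using j' by simp
    moreover have "(f^^j') x \<noteq> y" using bef 0 j' by simp
    ultimately show ?case using xn[of "(f^^j') x"] by simp
  next
    case (Suc i)
    then obtain j' where j': "j = Suc j'" by (cases j) auto
    have "(f^^i) x \<noteq> y" "(f^^j') x \<noteq> y" using bef Suc j' by auto
    moreover have "(f^^i) x \<noteq> (f^^j') x" using Suc j' by auto
    ultimately show ?case using inj[of "(f^^i) x" "(f^^j') x"] j' by auto
  qed
  have dist: "distinct p"
    unfolding p_def distinct_map
  proof
    show "inj_on (\<lambda>i. (f ^^ i) x) (set [0..<Suc k0])"
    proof (rule inj_onI)
      fix i j assume "i \<in> set [0..<Suc k0]" "j \<in> set [0..<Suc k0]" "(f^^i) x = (f^^j) x"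
      then show "i = j" using neq[of i j] neq[of j i] by (cases "i < j"; cases "j < i") auto
    qed
  qed simp
  have cov: "v \<in> set p" if "(f^^k) v = y" for k v
    using that
  proof (induction k arbitrary: v)
    case 0
    then show ?case unfolding p_def using k0y by force
  next
    case (Suc k)
    have "(f^^k) (f v) = y" using Suc.prems by (simp add: funpow_Suc_right del: funpow.simps)
    then have "f v \<in> set p" using Suc.IH by blast
    then obtain i where i: "i \<le> k0" "f v = (f^^i) x" unfolding p_def by (auto simp del: upt_Suc simp: less_Suc_eq_le)
    show ?case
    proof (cases "v = y")
      case True
      then show ?thesis unfolding p_def using k0y by force
    next
      case False
      show ?thesis
      proof (cases i)
        case 0
        then show ?thesis using i xn False by simp
      next
        case (Suc i')
        have "(f^^i') x \<noteq> y" using bef Suc i by simp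
        moreover have "f v = f ((f^^i') x)" using i Suc by simp
        ultimately have "v = (f^^i') x" using inj False by blast
        then show ?thesis unfolding p_def using Suc i by force
      qed
    qed
  qed
  have "set p = UNIV" using cov reach by blast
  moreover have "path_arcs p \<subseteq> {(v, f v) | v. True}"
  proof
    fix e assume "e \<in> path_arcs p"
    then obtain i where i: "i < length (tl p)" "e = (p ! i, tl p ! i)"
      unfolding path_arcs_def set_zip by auto
    then have "i < k0" unfolding p_def by simp
    then have "p ! i = (f^^i) x" "tl p ! i = (f^^(Suc i)) x"
      unfolding p_def by (simp_all add: nth_tl del: upt_Suc)
    then show "e \<in> {(v, f v) | v. True}" using i by auto
  qed
  ultimately show ?thesis using dist by blast
qed


definition Sset :: "'a::ab_group_add \<Rightarrow> 'a \<Rightarrow> 'a \<Rightarrow> nat \<Rightarrow> nat \<Rightarrow> 'a set" where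
  "Sset a h y m g = {v. \<exists>j. 1 \<le> j \<and> j \<le> m div 2 \<and> v - y - nm j a \<in> Mset h}
     \<union> {y - nm i h | i. 0 < i \<and> i < g}"

locale cayP =
  fixes a h y w :: "'a::ab_group_add" and m g :: nat
  assumes fin: "finite (UNIV::'a set)"
    and ev: "even m" and mpos: "0 < m"
    and mH: "nm m a \<in> Mset h"
    and mmin: "\<And>j. 0 < j \<Longrightarrow> j < m \<Longrightarrow> nm j a \<notin> Mset h"
    and cov: "\<And>v. \<exists>j<m. v - y - nm j a \<in> Mset h"
    and wdef: "w = nm m a + nm (m div 2) h"
    and gpos: "0 < g" and gW: "nm g h \<in> Mset w"
    and gmin: "\<And>i. 0 < i \<Longrightarrow> i < g \<Longrightarrow> nm i h \<notin> Mset w"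
begin

abbreviation S where "S \<equiv> Sset a h y m g"
abbreviation E where "E \<equiv> {y - nm i h | i. 0 < i \<and> i < g}"

definition inl :: "nat \<Rightarrow> 'a \<Rightarrow> bool" where
  "inl j v \<longleftrightarrow> v - y - nm j a \<in> Mset h"

definition f :: "'a \<Rightarrow> 'a" where
  "f v = (if v \<in> S then v + (a + h) else v + a)"

lemma m2: "2 \<le> m" using ev mpos by (auto elim!: evenE)

lemma mdiv: "1 \<le> m div 2" "m div 2 < m" using m2 by auto

lemma Hdiff: "u \<in> Mset h \<Longrightarrow> v \<in> Mset h \<Longrightarrow> u - v \<in> Mset h"
  using Mset_diff[OF fin] by blast

lemma Hneg: "u \<in> Mset h \<Longrightarrow> - u \<in> Mset h"
  using Mset_uminus[OF fin] by blast

lemma hH: "nm i h \<in> Mset h" unfolding Mset_def by auto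

lemma wH: "w \<in> Mset h"
  unfolding wdef by (rule Mset_add[OF mH hH])

lemma WH: "u \<in> Mset w \<Longrightarrow> u \<in> Mset h"
  using Mset_subset[OF wH] by blast

lemma Wdiff: "u \<in> Mset w \<Longrightarrow> v \<in> Mset w \<Longrightarrow> u - v \<in> Mset w"
  using Mset_diff[OF fin] by blast

lemma Wneg: "u \<in> Mset w \<Longrightarrow> - u \<in> Mset w"
  using Mset_uminus[OF fin] by blast

lemma layer_diff: assumes "nm j a - nm i a \<in> Mset h" "i < m" "j < m" shows "i = j"
proof (rule ccontr)
  assume "i \<noteq> j"
  show False
  proof (cases "i < j")
    case True
    then have "nm (j - i) a = nm j a - nm i a" by (simp add: nm_sub)
    then have "nm (j - i) a \<in> Mset h" using assms(1) by simp
    then show False using mmin[of "j - i"] assms True by simp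
  next
    case False
    then have ji: "j < i" using \<open>i \<noteq> j\<close> by simp
    then have "nm (i - j) a = - (nm j a - nm i a)" by (simp add: nm_sub)
    then have "nm (i - j) a \<in> Mset h" using Hneg[OF assms(1)] by simp
    then show False using mmin[of "i - j"] assms ji by simp
  qed
qed

lemma inl_unique: "inl i v \<Longrightarrow> inl j v \<Longrightarrow> i < m \<Longrightarrow> j < m \<Longrightarrow> i = j"
  unfolding inl_def
proof -
  assume a1: "v - y - nm i a \<in> Mset h" "v - y - nm j a \<in> Mset h" "i < m" "j < m"
  have "nm j a - nm i a = (v - y - nm i a) - (v - y - nm j a)" by (simp add: algebra_simps)
  then have "nm j a - nm i a \<in> Mset h" using Hdiff[OF a1(1,2)] by simp
  then show "i = j" using layer_diff a1 by blast
qed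

lemma inl_f: "inl j v \<Longrightarrow> inl (Suc j) (f v)"
proof -
  assume "inl j v"
  then have A: "v - y - nm j a \<in> Mset h" unfolding inl_def .
  show "inl (Suc j) (f v)"
  proof (cases "v \<in> S")
    case True
    then have eq: "f v - y - nm (Suc j) a = (v - y - nm j a) + h" unfolding f_def by (simp add: algebra_simps)
    show ?thesis unfolding inl_def eq by (rule Mset_add[OF A Mset_self])
  next
    case False
    then have eq: "f v - y - nm (Suc j) a = (v - y - nm j a)" unfolding f_def by (simp add: algebra_simps)
    show ?thesis unfolding inl_def eq by (rule A)
  qed
qed

lemma inl_iter: "inl j v \<Longrightarrow> inl (j + k) ((f^^k) v)"
  by (induction k) (auto intro: inl_f)

lemma inl_m: "inl m v \<longleftrightarrow> inl 0 v"
proof -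
  have "v - y - nm m a = (v - y) - nm m a" by simp
  then show ?thesis unfolding inl_def using Hdiff[OF _ mH] mH Mset_add[of "v - y - nm m a" h "nm m a"]
    by auto
qed

lemma E_inl0: "e \<in> E \<Longrightarrow> inl 0 e"
  unfolding inl_def using Hneg[OF hH] by auto

lemma S_low: "inl j v \<Longrightarrow> 1 \<le> j \<Longrightarrow> j \<le> m div 2 \<Longrightarrow> v \<in> S"
  unfolding Sset_def inl_def by blast

lemma S_high: assumes "inl j v" "m div 2 < j" "j < m" shows "v \<notin> S"
proof
  assume "v \<in> S"
  then consider (l) j' where "1 \<le> j'" "j' \<le> m div 2" "inl j' v" | (e) "v \<in> E"
    unfolding Sset_def inl_def by blast
  then show False
  proof cases
    case l
    then have "j' = j" using inl_unique[OF l(3) assms(1)] assms mdiv by linarith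
    then show False using l assms by simp
  next
    case e
    then have "0 = j" using inl_unique[OF E_inl0[OF e] assms(1)] assms mpos by blast
    then show False using assms by simp
  qed
qed

lemma S_zero: assumes "inl 0 v" shows "v \<in> S \<longleftrightarrow> v \<in> E"
proof
  assume "v \<in> S"
  then consider (l) j' where "1 \<le> j'" "j' \<le> m div 2" "inl j' v" | (e) "v \<in> E"
    unfolding Sset_def inl_def by blast
  then show "v \<in> E"
  proof cases
    case l
    then have "j' = 0" using inl_unique[OF l(3) assms(1)] mdiv mpos by linarith
    then show ?thesis using l by simp
  qed
next
  assume "v \<in> E" then show "v \<in> S" unfolding Sset_def by blast
qed

lemma iter1: "k \<le> m div 2 \<Longrightarrow> inl 1 z \<Longrightarrow> (f^^k) z = z + nm k (a + h)"
proof (induction k)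
  case 0
  then show ?case by simp
next
  case (Suc k)
  have IH: "(f^^k) z = z + nm k (a + h)" using Suc by simp
  have "inl (1 + k) ((f^^k) z)" using inl_iter[OF Suc.prems(2)] .
  then have "(f^^k) z \<in> S" using S_low[of "1 + k"] Suc.prems by simp
  then have "(f^^(Suc k)) z = (f^^k) z + (a + h)" by (simp add: f_def)
  then show ?case using IH by (simp add: algebra_simps)
qed

lemma iter2: "m div 2 + 1 + k \<le> m \<Longrightarrow> inl (m div 2 + 1) z \<Longrightarrow> (f^^k) z = z + nm k a"
proof (induction k)
  case 0
  then show ?case by simp
next
  case (Suc k)
  have IH: "(f^^k) z = z + nm k a" using Suc by simp
  have "inl (m div 2 + 1 + k) ((f^^k) z)" using inl_iter[OF Suc.prems(2)] .
  then have "(f^^k) z \<notin> S" using S_high[of "m div 2 + 1 + k"] Suc.prems by simp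
  then have "(f^^(Suc k)) z = (f^^k) z + a" by (simp add: f_def)
  then show ?case using IH by (simp add: algebra_simps)
qed

lemma round: assumes "inl 0 u" shows "(f^^m) u = u + w + (if u \<in> E then h else 0)"
proof -
  define k1 where "k1 = m div 2"
  define k2 where "k2 = m - 1 - m div 2"
  have mk: "m = k2 + (k1 + 1)" unfolding k1_def k2_def using mdiv by simp
  have fu: "f u = u + a + (if u \<in> E then h else 0)"
  proof (cases "u \<in> E")
    case True
    then have "u \<in> S" using S_zero[OF assms] by blast
    then have "f u = u + (a + h)" unfolding f_def by simp
    moreover have "(if u \<in> E then h else 0) = h" by (rule if_P[OF True])
    ultimately show ?thesis by (simp add: algebra_simps)
  next
    case False
    then have "u \<notin> S" using S_zero[OF assms] by blast
    then have "f u = u + a" unfolding f_def by simp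
    moreover have "(if u \<in> E then h else 0) = 0" by (rule if_not_P[OF False])
    ultimately show ?thesis by simp
  qed
  have l1: "inl 1 (f u)" using inl_f[OF assms] by simp
  have A: "(f^^k1) (f u) = f u + nm k1 (a + h)" using iter1[OF _ l1] unfolding k1_def by simp
  have l2: "inl (m div 2 + 1) ((f^^k1) (f u))" using inl_iter[OF l1, of k1] unfolding k1_def by simp
  have B: "(f^^k2) ((f^^k1) (f u)) = (f^^k1) (f u) + nm k2 a"
    using iter2[OF _ l2, of k2] unfolding k2_def using mdiv by simp
  have "(f^^m) u = (f^^k2) ((f^^k1) (f u))"
    unfolding mk funpow_add by (simp add: funpow_Suc_right del: funpow.simps)
  also have "\<dots> = u + (a + nm k1 a + nm k2 a) + nm k1 h + (if u \<in> E then h else 0)"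
    using A B fu by (simp add: nm_plus algebra_simps)
  also have "a + nm k1 a + nm k2 a = nm m a"
    unfolding mk nm_add by (simp add: algebra_simps)
  finally show ?thesis unfolding wdef k1_def by (simp add: algebra_simps)
qed

lemma to_layer0: "\<exists>k. inl 0 ((f^^k) v)"
proof -
  obtain j where j: "j < m" "inl j v" using cov unfolding inl_def by blast
  have "inl (j + (m - j)) ((f^^(m - j)) v)" by (rule inl_iter[OF j(2)])
  then have "inl m ((f^^(m - j)) v)" using j by simp
  then show ?thesis using inl_m by blast
qed

lemma cls_unique: assumes "i < g" "i' < g" "nm i' h - nm i h \<in> Mset w" shows "i = i'"
proof (rule ccontr)
  assume ne: "i \<noteq> i'"
  show False
  proof (cases "i < i'")
    case True
    then have "nm (i' - i) h = nm i' h - nm i h" by (simp add: nm_sub)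
    then have "nm (i' - i) h \<in> Mset w" using assms(3) by simp
    then show False using gmin[of "i' - i"] assms True by simp
  next
    case False
    then have ji: "i' < i" using ne by simp
    then have "nm (i - i') h = - (nm i' h - nm i h)" by (simp add: nm_sub)
    then have "nm (i - i') h \<in> Mset w" using Wneg[OF assms(3)] by simp
    then show False using gmin[of "i - i'"] assms ji by simp
  qed
qed

lemma wW: "nm d w \<in> Mset w" unfolding Mset_def by auto

lemma walk: "i < g \<Longrightarrow> u + nm d w = y - nm i h \<Longrightarrow> \<exists>k. (f^^k) u = y - nm i h"
proof (induction d arbitrary: u)
  case 0
  then show ?case by (intro exI[of _ 0]) simp
next
  case (Suc d)
  show ?case
  proof (cases "u = y - nm i h")
    case True
    then show ?thesis by (intro exI[of _ 0]) simp
  next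
    case False
    have ueq: "u = y - nm i h - nm (Suc d) w" using Suc.prems(2) by (simp add: algebra_simps)
    have eqn: "u - y - nm 0 a = - (nm i h + nm (Suc d) w)" unfolding ueq by (simp add: algebra_simps)
    have l0: "inl 0 u" unfolding inl_def eqn by (rule Hneg[OF Mset_add[OF hH WH[OF wW]]])
    have nE: "u \<notin> E"
    proof
      assume "u \<in> E"
      then obtain i' where i': "u = y - nm i' h" "0 < i'" "i' < g" by blast
      have eqn: "nm i h - nm i' h = - nm (Suc d) w" using ueq i'(1) by (simp add: algebra_simps)
      have "nm i h - nm i' h \<in> Mset w" unfolding eqn by (rule Wneg[OF wW])
      then have "i' = i" using cls_unique[OF i'(3) Suc.prems(1)] by simp
      then show False using False i' by simp
    qed
    have r: "(f^^m) u = u + w" using round[OF l0] if_not_P[OF nE, of h 0] by simp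
    have "(u + w) + nm d w = y - nm i h" using Suc.prems(2) by (simp add: algebra_simps)
    then obtain k where "(f^^k) (u + w) = y - nm i h" using Suc.IH Suc.prems(1) by blast
    then have "(f^^(k + m)) u = y - nm i h" using r by (simp add: funpow_add)
    then show ?thesis by blast
  qed
qed

lemma class_reach: "i < g \<Longrightarrow> u - (y - nm i h) \<in> Mset w \<Longrightarrow> \<exists>k. (f^^k) u = y"
proof (induction i arbitrary: u)
  case 0
  have "- (u - y) \<in> Mset w" using Wneg[OF 0(2)] by simp
  then obtain d where "nm d w = - (u - y)" unfolding Mset_def by auto
  then have "u + nm d w = y - nm 0 h" by (simp add: algebra_simps)
  then show ?case using walk[of 0 u d] 0 by simp
next
  case (Suc i)
  have "- (u - (y - nm (Suc i) h)) \<in> Mset w" using Wneg[OF Suc.prems(2)] .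
  then obtain d where "nm d w = - (u - (y - nm (Suc i) h))" unfolding Mset_def by auto
  then have "u + nm d w = y - nm (Suc i) h" by (simp add: algebra_simps)
  then obtain k1 where k1: "(f^^k1) u = y - nm (Suc i) h" using walk Suc.prems(1) by blast
  have eE: "y - nm (Suc i) h \<in> E" using Suc.prems(1) by blast
  have r: "(f^^m) (y - nm (Suc i) h) = y - nm (Suc i) h + w + h"
    using round[OF E_inl0[OF eE]] if_P[OF eE, of h 0] by simp
  have "(y - nm (Suc i) h + w + h) - (y - nm i h) = w" by (simp add: algebra_simps)
  then have "(y - nm (Suc i) h + w + h) - (y - nm i h) \<in> Mset w" by simp
  then obtain k2 where "(f^^k2) (y - nm (Suc i) h + w + h) = y" using Suc.IH Suc.prems(1) by force
  then have "(f^^(k2 + m + k1)) u = y" using r k1 by (simp add: funpow_add)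
  then show ?case by blast
qed

lemma reach: "\<exists>k. (f^^k) v = y"
proof -
  obtain k0 where l0: "inl 0 ((f^^k0) v)" using to_layer0 by blast
  define u where "u = (f^^k0) v"
  have "u - y \<in> Mset h" using l0 unfolding inl_def u_def by simp
  then obtain j where j: "u - y = nm j h" unfolding Mset_def by auto
  define r where "r = j mod g"
  define i where "i = (if r = 0 then 0 else g - r)"
  have ig: "i < g" unfolding i_def r_def using gpos by auto
  obtain c where c: "j + i = c * g"
  proof (cases "r = 0")
    case True
    then show ?thesis using that[of "j div g"] div_mult_mod_eq[of j g] unfolding i_def r_def by simp
  next
    case False
    have "j = j div g * g + r" unfolding r_def by simp
    moreover have "r < g" unfolding r_def using gpos by simp
    ultimately show ?thesis using that[of "j div g + 1"] False unfolding i_def by (simp add: algebra_simps)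
  qed
  have "u - (y - nm i h) = nm (j + i) h" using j by (simp add: nm_add algebra_simps)
  also have "\<dots> = nm c (nm g h)" unfolding c nm_mult ..
  finally have "u - (y - nm i h) \<in> Mset w" using Mset_nm[OF gW] by simp
  then obtain k where "(f^^k) u = y" using class_reach ig by blast
  then have "(f^^(k + k0)) v = y" unfolding u_def by (simp add: funpow_add)
  then show ?thesis by blast
qed

lemma y_notin_E: "y \<notin> E"
proof
  assume "y \<in> E"
  then obtain i where "y = y - nm i h" "0 < i" "i < g" by blast
  then show False using gmin[of i] by simp
qed

lemma f_inj: assumes "v \<noteq> y" "v' \<noteq> y" "f v = f v'" shows "v = v'"
proof -
  have main: "False" if vs: "v1 \<in> S" "v2 \<notin> S" "v2 \<noteq> y" "v1 + (a + h) = v2 + a" for v1 v2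
  proof -
    have v2: "v2 = v1 + h" using vs(4) by (simp add: algebra_simps)
    obtain j where j: "j < m" "inl j v1" using cov unfolding inl_def by blast
    have j2: "inl j v2" using j(2) unfolding inl_def v2
      using Mset_add[OF _ Mset_self[of h], of "v1 - y - nm j a"] by (simp add: algebra_simps)
    consider "j = 0" | "1 \<le> j \<and> j \<le> m div 2" | "m div 2 < j" by linarith
    then show False
    proof cases
      case 1
      then have "v1 \<in> E" using S_zero j vs by simp
      then obtain i where i: "v1 = y - nm i h" "0 < i" "i < g" by blast
      show False
      proof (cases "i = 1")
        case True
        then show False using v2 i vs by simp
      next
        case False
        then have "v2 = y - nm (i - 1) h" using v2 i by (cases i) (auto simp: algebra_simps)
        then have "v2 \<in> E" using i False by auto
        then show False using vs(2) unfolding Sset_def by blast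
      qed
    next
      case 2
      then show False using S_low[OF j2] vs by simp
    next
      case 3
      then show False using S_high[OF j(2) 3 j(1)] vs by simp
    qed
  qed
  show ?thesis
  proof (cases "v \<in> S"; cases "v' \<in> S")
    assume "v \<in> S" "v' \<in> S" then show ?thesis using assms(3) unfolding f_def by simp
  next
    assume "v \<notin> S" "v' \<notin> S" then show ?thesis using assms(3) unfolding f_def by simp
  next
    assume "v \<in> S" "v' \<notin> S" then show ?thesis using main[of v v'] assms unfolding f_def by simp
  next
    assume "v \<notin> S" "v' \<in> S" then show ?thesis using main[of v' v] assms unfolding f_def by simp
  qed
qed

definition x0 where "x0 = y - nm (g - 1) h + a"

lemma x0_notin: assumes "v \<noteq> y" shows "f v \<noteq> x0"
proof
  assume fv: "f v = x0"
  have l1: "inl 1 x0" unfolding inl_def x0_def using Hneg[OF hH] by (simp add: algebra_simps)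
  obtain j where j: "j < m" "inl j v" using cov unfolding inl_def by blast
  have "j = 0"
  proof (rule ccontr)
    assume "j \<noteq> 0"
    have ls: "inl (Suc j) x0" using inl_f[OF j(2)] fv by simp
    show False
    proof (cases "Suc j < m")
      case True
      then show False using inl_unique[OF ls l1] \<open>j \<noteq> 0\<close> m2 by simp
    next
      case False
      then have "Suc j = m" using j by simp
      then have "inl 0 x0" using ls inl_m by simp
      then show False using inl_unique[OF _ l1, of 0] m2 by simp
    qed
  qed
  then have l0: "inl 0 v" using j by simp
  show False
  proof (cases "v \<in> E")
    case True
    then obtain i where i: "v = y - nm i h" "0 < i" "i < g" by blast
    have "v \<in> S" using True unfolding Sset_def by blast
    then have "f v = v + (a + h)" unfolding f_def by simp
    then have e1: "v + (a + h) = x0" using fv by simp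
    have "y - nm i h + h = (v + (a + h)) - a" using i(1) by (simp add: algebra_simps)
    also have "\<dots> = x0 - a" using e1 by simp
    also have "\<dots> = y - nm (g - 1) h" unfolding x0_def by simp
    finally have "y - nm i h + h = y - nm (g - 1) h" .
    then have "nm i h = nm (g - 1) h + h" by (simp add: algebra_simps)
    also have "\<dots> = nm g h" using gpos by (cases g) (auto simp: algebra_simps)
    finally have "nm (g - i) h = 0" using i by (simp add: nm_sub)
    then show False using gmin[of "g - i"] i by simp
  next
    case False
    then have "v \<notin> S" using S_zero[OF l0] by simp
    then have "v + a = x0" using fv unfolding f_def by simp
    then have v: "v = y - nm (g - 1) h" unfolding x0_def by (simp add: algebra_simps)
    show False
    proof (cases "g = 1")
      case True then show False using v assms by simp
    next
      case False
      then have "v \<in> E" using v gpos by auto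
      then show False using \<open>v \<notin> E\<close> by simp
    qed
  qed
qed

theorem ham:
  "\<exists>p. distinct p \<and> set p = UNIV \<and>
     path_arcs p \<subseteq> {(v, v + (if v \<in> Sset a h y m g then a + h else a)) | v. True}"
proof -
  have "\<exists>p. distinct p \<and> set p = UNIV \<and> path_arcs p \<subseteq> {(v, f v) | v. True}"
    by (rule path_from_reach[of y f x0]) (use f_inj x0_notin reach in auto)
  then show ?thesis unfolding f_def by (auto simp: if_distrib)
qed

end


lemma add_subgroup_Mset:
  assumes "finite (UNIV::'a::ab_group_add set)"
  shows "add_subgroup (Mset (x::'a))"
  unfolding add_subgroup_def using Mset_add Mset_uminus[OF assms] by auto

lemma gen_single:
  assumes fin: "finite (UNIV::'a::ab_group_add set)"
  shows "gen_subgroup {x::'a} = Mset x"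
proof
  show "gen_subgroup {x} \<subseteq> Mset x"
    unfolding gen_subgroup_def using add_subgroup_Mset[OF fin, of x] by auto
next
  show "Mset x \<subseteq> gen_subgroup {x}"
  proof
    fix u assume "u \<in> Mset x"
    then obtain k where k: "u = nm k x" unfolding Mset_def by auto
    have "nm k x \<in> H" if "add_subgroup H" "x \<in> H" for H
      using that by (induction k) (auto simp: add_subgroup_def)
    then show "u \<in> gen_subgroup {x}" unfolding gen_subgroup_def k by auto
  qed
qed

lemma gen_two:
  assumes fin: "finite (UNIV::'a::ab_group_add set)" and gen: "gen_subgroup {a, b} = (UNIV::'a set)"
  shows "\<exists>i j. v = nm i a + nm j (b::'a)"
proof -
  define T where "T = {nm i a + nm j b | i j. True}"
  have "add_subgroup T" unfolding add_subgroup_def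
  proof (intro conjI ballI)
    show "0 \<in> T" unfolding T_def by (auto intro!: exI[of _ 0])
  next
    fix u v assume "u \<in> T" "v \<in> T"
    then obtain i j i' j' where "u = nm i a + nm j b" "v = nm i' a + nm j' b" unfolding T_def by auto
    then have "u + v = nm (i + i') a + nm (j + j') b" by (simp add: nm_add algebra_simps)
    then show "u + v \<in> T" unfolding T_def by blast
  next
    fix u assume "u \<in> T"
    then obtain i j where u: "u = nm i a + nm j b" unfolding T_def by auto
    have "- nm i a \<in> Mset a" "- nm j b \<in> Mset b"
      using Mset_uminus[OF fin] unfolding Mset_def by auto
    then obtain i' j' where "- nm i a = nm i' a" "- nm j b = nm j' b" unfolding Mset_def by auto
    then have "- u = nm i' a + nm j' b" unfolding u by (simp add: algebra_simps)
    then show "- u \<in> T" unfolding T_def by blast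
  qed
  moreover have "{a, b} \<subseteq> T"
  proof -
    have "a = nm 1 a + nm 0 b" "b = nm 0 a + nm 1 b" by simp_all
    then show ?thesis unfolding T_def by blast
  qed
  ultimately have "gen_subgroup {a, b} \<subseteq> T" unfolding gen_subgroup_def by auto
  then show ?thesis using gen unfolding T_def by auto
qed

theorem mainTheorem5:
  fixes a b :: "'a::ab_group_add"
  assumes "finite (UNIV :: 'a set)"
    and "a \<noteq> b"
    and "gen_subgroup {a, b} = UNIV"
    and "a \<noteq> 0" and "b \<noteq> 0"
    and "even (subgroup_index (gen_subgroup {a - b}))"
  shows "\<exists>p q. ham_path a b p \<and> ham_path a b q \<and> path_arcs p \<inter> path_arcs q = {}"
proof -
  note fin = assms(1)
  define h where "h = b - a"
  have bah: "b = a + h" unfolding h_def by simp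
  have Mab: "Mset (a - b) = Mset h"
    using Mset_neg[OF fin, of h] unfolding h_def by (simp add: algebra_simps)
  have Hgen: "gen_subgroup {a - b} = Mset h" using gen_single[OF fin] Mab by simp
  have Hdiff: "u - v \<in> Mset h" if "u \<in> Mset h" "v \<in> Mset h" for u v
    using Mset_diff[OF fin] that by blast
  have hH: "nm i h \<in> Mset h" for i unfolding Mset_def by auto
  obtain Na where Na: "Na > 0" "nm Na a = 0" using fin_ord[OF fin] by blast
  define m where "m = (LEAST m. 0 < m \<and> nm m a \<in> Mset h)"
  have mex: "0 < Na \<and> nm Na a \<in> Mset h" using Na by simp
  have mprop: "0 < m \<and> nm m a \<in> Mset h" unfolding m_def using mex by (rule LeastI)
  have mmin: "nm j a \<notin> Mset h" if "0 < j" "j < m" for j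
    using not_less_Least[of j "\<lambda>m. 0 < m \<and> nm m a \<in> Mset h"] that unfolding m_def by blast
  have ldiff: "i = j" if "nm j a - nm i a \<in> Mset h" "i < m" "j < m" for i j
  proof (rule ccontr)
    assume ne: "i \<noteq> j"
    show False
    proof (cases "i < j")
      case True
      then have "nm (j - i) a = nm j a - nm i a" by (simp add: nm_sub)
      then have "nm (j - i) a \<in> Mset h" using that(1) by simp
      then show False using mmin[of "j - i"] that True by simp
    next
      case False
      then have ji: "j < i" using ne by simp
      then have "nm (i - j) a = - (nm j a - nm i a)" by (simp add: nm_sub)
      then have "nm (i - j) a \<in> Mset h" using Mset_uminus[OF fin that(1)] by simp
      then show False using mmin[of "i - j"] that ji by simp
    qed
  qed
  have cov: "\<exists>j<m. v - 0 - nm j a \<in> Mset h" for v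
  proof -
    obtain i j where v: "v = nm i a + nm j b" using gen_two[OF fin assms(3)] by blast
    define I where "I = i + j"
    have "I = I div m * m + I mod m" by simp
    then have "nm I a = nm (I div m) (nm m a) + nm (I mod m) a"
      by (metis nm_add nm_mult)
    moreover have "v = nm I a + nm j h" unfolding v I_def bah by (simp add: nm_plus nm_add algebra_simps)
    ultimately have "v - 0 - nm (I mod m) a = nm (I div m) (nm m a) + nm j h" by (simp add: algebra_simps)
    moreover have "nm (I div m) (nm m a) + nm j h \<in> Mset h"
      using Mset_add[OF Mset_nm[OF conjunct2[OF mprop]] hH] .
    moreover have "I mod m < m" using mprop by simp
    ultimately show ?thesis by metis
  qed
  have cardU: "card (UNIV::'a set) = m * card (Mset h)"
  proof -
    define A where "A j = (\<lambda>z. nm j a + z) ` Mset h" for j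
    have U: "UNIV = (\<Union>j\<in>{..<m}. A j)"
    proof (rule set_eqI, rule iffI)
      fix v :: 'a
      obtain j where "j < m" "v - 0 - nm j a \<in> Mset h" using cov by blast
      then show "v \<in> (\<Union>j\<in>{..<m}. A j)" unfolding A_def
        by (auto intro!: bexI[of _ j] image_eqI[of v _ "v - nm j a"])
    qed simp
    have disj: "A i \<inter> A j = {}" if "i \<in> {..<m}" "j \<in> {..<m}" "i \<noteq> j" for i j
    proof (rule ccontr)
      assume "A i \<inter> A j \<noteq> {}"
      then obtain z z' where zz: "z \<in> Mset h" "z' \<in> Mset h" "nm i a + z = nm j a + z'"
        unfolding A_def by auto
      then have "nm j a - nm i a = z - z'" by (simp add: algebra_simps)
      then have "nm j a - nm i a \<in> Mset h" using Hdiff[OF zz(1,2)] by simp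
      then show False using ldiff that by auto
    qed
    have cA: "card (A j) = card (Mset h)" for j
      unfolding A_def by (rule card_image) (auto simp: inj_on_def)
    have "card (UNIV::'a set) = (\<Sum>j\<in>{..<m}. card (A j))"
      unfolding U by (rule card_UN_disjoint) (use finite_subset[OF subset_UNIV fin] disj in auto)
    also have "\<dots> = m * card (Mset h)" using cA by simp
    finally show ?thesis .
  qed
  have cpos: "0 < card (Mset h)"
  proof -
    have "finite (Mset h)" using finite_subset[OF subset_UNIV fin] .
    moreover have "Mset h \<noteq> {}" using Mset_0[of h] by blast
    ultimately show ?thesis by (simp add: card_gt_0_iff)
  qed
  have idx: "subgroup_index (gen_subgroup {a - b}) = m"
    unfolding subgroup_index_def Hgen cardU using cpos by simp
  have evm: "even m" using assms(6) idx by simp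
  define w where "w = nm m a + nm (m div 2) h"
  obtain Nh where Nh: "Nh > 0" "nm Nh h = 0" using fin_ord[OF fin] by blast
  define g where "g = (LEAST g. 0 < g \<and> nm g h \<in> Mset w)"
  have gex: "0 < Nh \<and> nm Nh h \<in> Mset w" using Nh by simp
  have gprop: "0 < g \<and> nm g h \<in> Mset w" unfolding g_def using gex by (rule LeastI)
  have gmin: "nm i h \<notin> Mset w" if "0 < i" "i < g" for i
    using not_less_Least[of i "\<lambda>g. 0 < g \<and> nm g h \<in> Mset w"] that unfolding g_def by blast
  interpret P: cayP a h 0 w m g
    by unfold_locales (use fin evm mprop mmin cov gprop gmin w_def in auto)
  have mm: "m = m div 2 + m div 2" using evm by auto
  interpret Q: cayP b "a - b" "- nm g h" w m g
  proof unfold_locales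
    show "finite (UNIV::'a set)" by (rule fin)
    show "even m" by (rule evm)
    show "0 < m" using mprop by simp
    have "nm m b = nm m a + nm m h" unfolding bah nm_plus ..
    then show "nm m b \<in> Mset (a - b)" unfolding Mab
      using Mset_add[OF conjunct2[OF mprop] hH] by simp
    show "nm j b \<notin> Mset (a - b)" if "0 < j" "j < m" for j
    proof
      assume "nm j b \<in> Mset (a - b)"
      then have "nm j b - nm j h \<in> Mset h" unfolding Mab using Hdiff hH by blast
      then have "nm j a \<in> Mset h" unfolding bah nm_plus by simp
      then show False using mmin that by blast
    qed
    show "\<exists>j<m. v - - nm g h - nm j b \<in> Mset (a - b)" for v
    proof -
      obtain j where j: "j < m" "v - 0 - nm j a \<in> Mset h" using cov by blast
      have e: "v - - nm g h - nm j b = (v - 0 - nm j a) - (nm j h - nm g h)"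
        unfolding bah nm_plus by (simp add: algebra_simps)
      have "v - - nm g h - nm j b \<in> Mset h" unfolding e by (rule Hdiff[OF j(2) Hdiff[OF hH hH]])
      then show ?thesis using j(1) unfolding Mab by blast
    qed
    show "w = nm m b + nm (m div 2) (a - b)"
    proof -
      have "nm m b + nm (m div 2) (a - b) = nm m a + (nm m h - nm (m div 2) h)"
        unfolding bah nm_plus nm_diff by (simp add: algebra_simps)
      also have "nm m h - nm (m div 2) h = nm (m div 2) h"
        using nm_add[of "m div 2" "m div 2" h] mm by simp
      finally show ?thesis unfolding w_def by simp
    qed
    show "0 < g" using gprop by simp
    have abh: "a - b = - h" unfolding h_def by simp
    show "nm g (a - b) \<in> Mset w" unfolding abh nm_uminus
      using Mset_uminus[OF fin] gprop by blast
    show "nm i (a - b) \<notin> Mset w" if "0 < i" "i < g" for i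
    proof
      assume "nm i (a - b) \<in> Mset w"
      then have "- nm i (a - b) \<in> Mset w" using Mset_uminus[OF fin] by blast
      then have "nm i h \<in> Mset w" unfolding abh nm_uminus by simp
      then show False using gmin that by blast
    qed
  qed
  have Seq: "Sset b (a - b) (- nm g h) m g = Sset a h 0 m g"
  proof -
    have L: "(v - - nm g h - nm j b \<in> Mset h) \<longleftrightarrow> (v - 0 - nm j a \<in> Mset h)" for v j
    proof -
      have e: "v - - nm g h - nm j b = (v - 0 - nm j a) + (nm g h - nm j h)"
        unfolding bah nm_plus by (simp add: algebra_simps)
      have D: "nm g h - nm j h \<in> Mset h" using Hdiff hH by blast
      show ?thesis
      proof
        assume "v - - nm g h - nm j b \<in> Mset h"
        then have "(v - - nm g h - nm j b) - (nm g h - nm j h) \<in> Mset h" using Hdiff D by blast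
        then show "v - 0 - nm j a \<in> Mset h" unfolding e by simp
      next
        assume "v - 0 - nm j a \<in> Mset h"
        then show "v - - nm g h - nm j b \<in> Mset h" unfolding e using Mset_add D by blast
      qed
    qed
    have R: "{- nm g h - nm i (a - b) | i. 0 < i \<and> i < g} = {0 - nm i h | i. 0 < i \<and> i < g}"
    proof -
      have abh: "a - b = - h" unfolding h_def by simp
      have e: "- nm g h - nm i (a - b) = 0 - nm (g - i) h" if "i < g" for i
        unfolding abh nm_uminus using that by (simp add: nm_sub)
      show ?thesis
      proof (rule set_eqI, rule iffI)
        fix z assume "z \<in> {- nm g h - nm i (a - b) | i. 0 < i \<and> i < g}"
        then obtain i where "z = - nm g h - nm i (a - b)" "0 < i" "i < g" by blast
        then show "z \<in> {0 - nm i h | i. 0 < i \<and> i < g}" using e by (intro CollectI exI[of _ "g - i"]) auto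
      next
        fix z assume "z \<in> {0 - nm i h | i. 0 < i \<and> i < g}"
        then obtain i where i: "z = 0 - nm i h" "0 < i" "i < g" by blast
        then have "z = - nm g h - nm (g - i) (a - b)" using e[of "g - i"] by simp
        then show "z \<in> {- nm g h - nm i (a - b) | i. 0 < i \<and> i < g}" using i
          by (intro CollectI exI[of _ "g - i"]) auto
      qed
    qed
    show ?thesis unfolding Sset_def Mab L R ..
  qed
  obtain p where p: "distinct p" "set p = UNIV"
    "path_arcs p \<subseteq> {(v, v + (if v \<in> Sset a h 0 m g then a + h else a)) | v. True}"
    using P.ham by blast
  obtain q where q: "distinct q" "set q = UNIV"
    "path_arcs q \<subseteq> {(v, v + (if v \<in> Sset a h 0 m g then b + (a - b) else b)) | v. True}"
    using Q.ham unfolding Seq by blast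
  have ahb: "a + h = b" unfolding h_def by simp
  have bab: "b + (a - b) = a" by simp
  have hp: "ham_path a b p" unfolding ham_path_def cay_arcs_def
    using p ahb by auto
  have hq: "ham_path a b q" unfolding ham_path_def cay_arcs_def
    using q bab by auto
  have "path_arcs p \<inter> path_arcs q = {}"
  proof (rule ccontr)
    assume "path_arcs p \<inter> path_arcs q \<noteq> {}"
    then obtain v z where vz: "(v, z) \<in> path_arcs p" "(v, z) \<in> path_arcs q" by auto
    have "z = v + (if v \<in> Sset a h 0 m g then b else a)" using vz(1) p(3) ahb by auto
    moreover have "z = v + (if v \<in> Sset a h 0 m g then a else b)" using vz(2) q(3) bab by auto
    ultimately show False using assms(2) by (cases "v \<in> Sset a h 0 m g") auto
  qed
  then show ?thesis using hp hq by blast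
qed

end
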